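(* Let $n\ge2$ and $1\le m\le n-1$ be integers and let $\alpha$ be real with $n-m<\alpha<m(n-m)$. Then for primes $p$ there exists a subset $G\subset G(n,n-m)$ such that $|G|\approx p^{\alpha}$ and for every $\xi\in\mathbb{F}_p^n\setminus\{0\}$, \[ |\{W\in G:\ \xi\in Per(W)\}|\lesssim |G|\,p^{-(n-m)}. \]
   Context: $\mathbb{F}_p$ is the field with $p$ elements and $G(n,k)$ is the set of all $k$-dimensional linear subspaces of $\mathbb{F}_p^n$. For a subspace $W$, $Per(W)=\{x\in\mathbb{F}_p^n:\ x\cdot w=0\ \text{for all } w\in W\}$ with $x\cdot w=\sum_i x_iw_i$. $|J|$ denotes cardinality. $f\lesssim g$ means $f\le Cg$ with $C$ independent of $p$ and $\xi$; $f\approx g$ means $f\lesssim g$ and $g\lesssim f$. *)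

theory Defs
  imports Complex_Main "HOL-Computational_Algebra.Primes"
begin

text \<open>Vectors of F_p^n: functions nat => nat with entries in {0..<p} at coordinates
 i < n and 0 elsewhere; arithmetic is taken mod p.\<close>

definition Fpn :: "nat \<Rightarrow> nat \<Rightarrow> (nat \<Rightarrow> nat) set" where
  "Fpn p n = {x. (\<forall>i<n. x i < p) \<and> (\<forall>i\<ge>n. x i = 0)}"

definition zero_vec :: "nat \<Rightarrow> nat" where
  "zero_vec = (\<lambda>i. 0)"

definition lin_comb :: "nat \<Rightarrow> (nat \<Rightarrow> nat) list \<Rightarrow> (nat \<Rightarrow> nat) \<Rightarrow> (nat \<Rightarrow> nat)" where
  "lin_comb p vs c = (\<lambda>i. (\<Sum>j<length vs. c j * (vs ! j) i) mod p)"

definition span_p :: "nat \<Rightarrow> (nat \<Rightarrow> nat) list \<Rightarrow> (nat \<Rightarrow> nat) set" where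
  "span_p p vs = {lin_comb p vs c | c. True}"

definition lin_indep_p :: "nat \<Rightarrow> (nat \<Rightarrow> nat) list \<Rightarrow> bool" where
  "lin_indep_p p vs \<longleftrightarrow> (\<forall>c. lin_comb p vs c = zero_vec \<longrightarrow> (\<forall>j<length vs. c j mod p = 0))"

definition Gr :: "nat \<Rightarrow> nat \<Rightarrow> nat \<Rightarrow> (nat \<Rightarrow> nat) set set" where
  "Gr p n k = {span_p p vs | vs. length vs = k \<and> set vs \<subseteq> Fpn p n \<and> lin_indep_p p vs}"

definition dot_p :: "nat \<Rightarrow> nat \<Rightarrow> (nat \<Rightarrow> nat) \<Rightarrow> (nat \<Rightarrow> nat) \<Rightarrow> nat" where
  "dot_p p n x w = (\<Sum>i<n. x i * w i) mod p"

definition Per :: "nat \<Rightarrow> nat \<Rightarrow> (nat \<Rightarrow> nat) set \<Rightarrow> (nat \<Rightarrow> nat) set" where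
  "Per p n W = {x \<in> Fpn p n. \<forall>w\<in>W. dot_p p n x w = 0}"

end

theory Submission imports Defs "HOL-Computational_Algebra.Polynomial" "HOL-Number_Theory.Cong" "HOL-Library.FuncSet"
begin

lemma roots_mod_p:
  fixes p :: nat
  assumes "prime p"
  shows "(\<exists>j. \<not> int p dvd coeff f j) \<Longrightarrow>
         card {t\<in>{..<p}. int p dvd poly f (int t)} \<le> degree f"
proof (induction "degree f" arbitrary: f rule: less_induct)
  case less
  show ?case
  proof (cases "{t\<in>{..<p}. int p dvd poly f (int t)} = {}")
    case True then show ?thesis by (metis card.empty le0)
  next
    case False
    then obtain t0 where t0: "t0 < p" "int p dvd poly f (int t0)" by auto
    define q where "q = synthetic_div f (int t0)"
    have fq: "f = [:- int t0, 1:] * q + [:poly f (int t0):]"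
      using synthetic_div_correct'[of "int t0" f] unfolding q_def by simp
    have nq: "\<exists>j. \<not> int p dvd coeff q j"
    proof (rule ccontr)
      assume "\<not> ?thesis"
      hence allq: "\<forall>j. int p dvd coeff q j" by blast
      have "int p dvd coeff f j" for j
      proof -
        have "int p dvd coeff ([:- int t0, 1:] * q) j"
          unfolding coeff_mult by (intro dvd_sum dvd_mult allq[rule_format])
        moreover have "int p dvd coeff [:poly f (int t0):] j"
          using t0(2) by (cases j) auto
        ultimately show ?thesis by (subst fq) simp
      qed
      with less.prems show False by blast
    qed
    have degf: "degree f \<noteq> 0"
    proof
      assume "degree f = 0"
      then obtain c where "f = [:c:]" using degree_eq_zeroE by blast
      with less.prems t0(2) show False by (auto simp: coeff_pCons split: nat.splits) (metis Suc_pred)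
    qed
    have degq: "degree q = degree f - 1" unfolding q_def by (rule degree_synthetic_div)
    have IH: "card {t\<in>{..<p}. int p dvd poly q (int t)} \<le> degree q"
      using less.hyps[of q] nq degq degf by simp
    have sub: "{t\<in>{..<p}. int p dvd poly f (int t)} \<subseteq> insert t0 {t\<in>{..<p}. int p dvd poly q (int t)}"
    proof
      fix t assume t: "t \<in> {t\<in>{..<p}. int p dvd poly f (int t)}"
      have "poly f (int t) = (int t - int t0) * poly q (int t) + poly f (int t0)"
        by (subst fq) (simp add: algebra_simps)
      hence "int p dvd (int t - int t0) * poly q (int t)"
        using t t0(2) by (metis (no_types, lifting) dvd_add_left_iff mem_Collect_eq)
      hence "int p dvd (int t - int t0) \<or> int p dvd poly q (int t)"
        using prime_dvd_mult_iff[of "int p"] assms by simp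
      moreover have "int p dvd (int t - int t0) \<Longrightarrow> t = t0"
      proof -
        assume d: "int p dvd (int t - int t0)"
        have "\<bar>int t - int t0\<bar> < int p" using t t0 by auto
        show "t = t0"
        proof (rule ccontr)
          assume "t \<noteq> t0"
          hence "int t - int t0 \<noteq> 0" by simp
          from dvd_imp_le_int[OF this d] \<open>\<bar>int t - int t0\<bar> < int p\<close> show False by linarith
        qed
      qed
      ultimately show "t \<in> insert t0 {t\<in>{..<p}. int p dvd poly q (int t)}" using t by auto
    qed
    have "card {t\<in>{..<p}. int p dvd poly f (int t)} \<le> card (insert t0 {t\<in>{..<p}. int p dvd poly q (int t)})"
      by (rule card_mono[OF _ sub]) auto
    also have "\<dots> \<le> Suc (card {t\<in>{..<p}. int p dvd poly q (int t)})"
      by (rule card_insert_le_m1) auto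
    finally show ?thesis using IH degq degf by linarith
  qed
qed

lemma pivot_count:
  assumes fin: "finite I" and j0: "j0 \<in> I" and finX: "\<forall>i\<in>I. finite (X i)"
    and bnd: "\<forall>z\<in>PiE (I - {j0}) X. card {v\<in>X j0. Q (z(j0:=v))} \<le> e"
  shows "card {x\<in>PiE I X. Q x} * card (X j0) \<le> e * card (PiE I X)"
proof -
  define Z where "Z = PiE (I - {j0}) X"
  define T where "T = (SIGMA z:Z. {v\<in>X j0. Q (z(j0:=v))})"
  have finZ: "finite Z" unfolding Z_def using fin finX by (intro finite_PiE) auto
  have sub: "{x\<in>PiE I X. Q x} \<subseteq> (\<lambda>(z,v). z(j0:=v)) ` T"
  proof
    fix x assume x: "x \<in> {x\<in>PiE I X. Q x}"
    define z where "z = restrict x (I - {j0})"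
    have zZ: "z \<in> Z" unfolding z_def Z_def using x by (auto simp: PiE_iff)
    have xz: "x = z(j0 := x j0)"
    proof
      fix i show "x i = (z(j0 := x j0)) i"
        using x j0 by (cases "i = j0") (auto simp: z_def PiE_iff extensional_def)
    qed
    have "(z, x j0) \<in> T" unfolding T_def using zZ x j0 xz by (auto simp: PiE_iff)
    then show "x \<in> (\<lambda>(z,v). z(j0:=v)) ` T" using xz by force
  qed
  have "card {x\<in>PiE I X. Q x} \<le> card ((\<lambda>(z,v). z(j0:=v)) ` T)"
    by (rule card_mono[OF _ sub]) (use finZ finX j0 in \<open>auto simp: T_def\<close>)
  also have "\<dots> \<le> card T" by (rule card_image_le) (use finZ finX j0 in \<open>auto simp: T_def\<close>)
  also have "card T = (\<Sum>z\<in>Z. card {v\<in>X j0. Q (z(j0:=v))})"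
    unfolding T_def by (rule card_SigmaI) (use finZ finX j0 in auto)
  also have "\<dots> \<le> (\<Sum>z\<in>Z. e)" by (rule sum_mono) (use bnd in \<open>auto simp: Z_def\<close>)
  also have "\<dots> = e * card Z" by simp
  finally have c1: "card {x\<in>PiE I X. Q x} \<le> e * card Z" .
  have "card (PiE I X) = (\<Prod>i\<in>I. card (X i))" by (rule card_PiE[OF fin])
  also have "\<dots> = card (X j0) * (\<Prod>i\<in>I - {j0}. card (X i))"
    using fin j0 by (simp add: prod.remove)
  also have "(\<Prod>i\<in>I - {j0}. card (X i)) = card Z" unfolding Z_def using fin by (simp add: card_PiE)
  finally have c2: "card (PiE I X) = card (X j0) * card Z" .
  show ?thesis using c1 c2 by (simp add: mult_right_mono)
qed

definition phi :: "nat \<Rightarrow> nat \<Rightarrow> nat \<Rightarrow> (nat \<Rightarrow> nat) \<Rightarrow> (nat \<Rightarrow> nat)" where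
  "phi p m a x = (\<lambda>q. if q < a then x q else if q < m then
      (x a ^ (q - a + 1) + (if q = m - 1 then x (a+1) else 0)) mod p else 0)"

definition Par :: "nat \<Rightarrow> nat \<Rightarrow> nat set \<Rightarrow> (nat \<Rightarrow> nat) set" where
  "Par p a S = PiE {..<a+2} (\<lambda>j. if j = a+1 then S else {..<p})"

definition Fr :: "nat \<Rightarrow> nat \<Rightarrow> nat \<Rightarrow> (nat \<Rightarrow> nat) \<Rightarrow> (nat \<Rightarrow> nat) \<Rightarrow> nat" where
  "Fr m a c \<eta> x = c + (\<Sum>q<a. \<eta> q * x q) +
     (\<Sum>q\<in>{a..<m}. \<eta> q * (x a ^ (q - a + 1) + (if q = m - 1 then x (a+1) else 0)))"

lemma cond_eq:
  assumes "a < m"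
  shows "(c + (\<Sum>q<m. \<eta> q * phi p m a x q)) mod p = Fr m a c \<eta> x mod p"
proof -
  have split: "{..<m} = {..<a} \<union> {a..<m}" using assms by auto
  have "(\<Sum>q<m. \<eta> q * phi p m a x q) = (\<Sum>q<a. \<eta> q * phi p m a x q) + (\<Sum>q\<in>{a..<m}. \<eta> q * phi p m a x q)"
    by (subst split, rule sum.union_disjoint) auto
  also have "(\<Sum>q<a. \<eta> q * phi p m a x q) = (\<Sum>q<a. \<eta> q * x q)"
    by (rule sum.cong) (auto simp: phi_def)
  also have "(\<Sum>q\<in>{a..<m}. \<eta> q * phi p m a x q) =
     (\<Sum>q\<in>{a..<m}. \<eta> q * ((x a ^ (q - a + 1) + (if q = m - 1 then x (a+1) else 0)) mod p))"
    by (rule sum.cong) (auto simp: phi_def)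
  finally have e1: "(\<Sum>q<m. \<eta> q * phi p m a x q) = (\<Sum>q<a. \<eta> q * x q) +
     (\<Sum>q\<in>{a..<m}. \<eta> q * ((x a ^ (q - a + 1) + (if q = m - 1 then x (a+1) else 0)) mod p))" .
  have e2: "(\<Sum>q\<in>{a..<m}. \<eta> q * ((x a ^ (q - a + 1) + (if q = m - 1 then x (a+1) else 0)) mod p)) mod p
     = (\<Sum>q\<in>{a..<m}. \<eta> q * (x a ^ (q - a + 1) + (if q = m - 1 then x (a+1) else 0))) mod p"
    by (subst mod_sum_eq[symmetric], subst (2) mod_sum_eq[symmetric]) (simp add: mod_mult_right_eq)
  show ?thesis unfolding e1 Fr_def
    by (metis (no_types, lifting) e2 group_cancel.add1 mod_add_right_eq)
qed

lemma int_dvd_nat: "(int p dvd int x) = (p dvd x)" by simp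

lemma row_count:
  assumes p: "prime p" and am: "a < m" and S: "S \<subseteq> {..<p}" "finite S"
    and q0: "q0 < m" "\<eta> q0 mod p \<noteq> 0"
  shows "card {x\<in>Par p a S. (c + (\<Sum>q<m. \<eta> q * phi p m a x q)) mod p = 0} * p
         \<le> m * card (Par p a S)"
proof -
  define X where "X = (\<lambda>j. if j = a+1 then S else {..<p})"
  have finX: "\<forall>i\<in>{..<a+2}. finite (X i)" using S by (auto simp: X_def)
  have eqset: "{x\<in>Par p a S. (c + (\<Sum>q<m. \<eta> q * phi p m a x q)) mod p = 0}
       = {x\<in>PiE {..<a+2} X. p dvd Fr m a c \<eta> x}"
    unfolding Par_def X_def using cond_eq[OF am] by (auto simp: dvd_eq_mod_eq_0)
  have "\<not> p dvd \<eta> q0" using q0(2) by (simp add: dvd_eq_mod_eq_0)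
  hence npd: "\<not> int p dvd int (\<eta> q0)" using int_dvd_nat by metis
  show ?thesis
  proof (cases "a \<le> q0")
    case True
    have "card {x\<in>PiE {..<a+2} X. p dvd Fr m a c \<eta> x} * card (X a) \<le> m * card (PiE {..<a+2} X)"
    proof (rule pivot_count[OF _ _ finX])
      show "\<forall>z\<in>PiE ({..<a+2} - {a}) X. card {v\<in>X a. p dvd Fr m a c \<eta> (z(a:=v))} \<le> m"
      proof
        fix z assume z: "z \<in> PiE ({..<a+2} - {a}) X"
        define K where "K = c + (\<Sum>q<a. \<eta> q * z q) + (\<Sum>q\<in>{a..<m}. \<eta> q * (if q = m - 1 then z (a+1) else 0))"
        define f where "f = [:int K:] + (\<Sum>q\<in>{a..<m}. monom (int (\<eta> q)) (q - a + 1))"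
        have pf: "int (Fr m a c \<eta> (z(a:=v))) = poly f (int v)" for v
        proof -
          have "Fr m a c \<eta> (z(a:=v)) = K + (\<Sum>q\<in>{a..<m}. \<eta> q * v ^ (q - a + 1))"
          proof -
            have s1: "(\<Sum>q<a. \<eta> q * (z(a:=v)) q) = (\<Sum>q<a. \<eta> q * z q)" by (rule sum.cong) auto
            have s2: "(\<Sum>q\<in>{a..<m}. \<eta> q * ((z(a:=v)) a ^ (q - a + 1) + (if q = m - 1 then (z(a:=v)) (a+1) else 0)))
               = (\<Sum>q\<in>{a..<m}. \<eta> q * v ^ (q - a + 1)) + (\<Sum>q\<in>{a..<m}. \<eta> q * (if q = m - 1 then z (a+1) else 0))"
              proof -
                have "(z(a:=v)) (a+1) = z (a+1)" by simp
                then show ?thesis by (simp only: sum.distrib[symmetric] distrib_left fun_upd_same)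
              qed
            show ?thesis unfolding Fr_def K_def s1 s2 by simp
          qed
          then show ?thesis by (simp add: f_def poly_sum poly_monom)
        qed
        have cf: "coeff f (q0 - a + 1) = int (\<eta> q0)"
        proof -
          have "coeff f (q0 - a + 1) = (\<Sum>q\<in>{a..<m}. if q - a + 1 = q0 - a + 1 then int (\<eta> q) else 0)"
            by (simp add: f_def coeff_sum coeff_monom)
          also have "\<dots> = (\<Sum>q\<in>{a..<m}. if q = q0 then int (\<eta> q) else 0)"
            by (rule sum.cong) (use True in auto)
          also have "\<dots> = int (\<eta> q0)" using True q0 by simp
          finally show ?thesis .
        qed
        have df: "degree f \<le> m - a"
        proof (rule degree_le, intro allI impI)
          fix i assume i: "m - a < i"
          have "coeff f i = (\<Sum>q\<in>{a..<m}. if q - a + 1 = i then int (\<eta> q) else 0)"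
            using i by (cases i) (simp_all add: f_def coeff_sum coeff_monom)
          also have "\<dots> = 0" by (rule sum.neutral) (use i in auto)
          finally show "coeff f i = 0" .
        qed
        have "card {v\<in>X a. p dvd Fr m a c \<eta> (z(a:=v))} = card {t\<in>{..<p}. int p dvd poly f (int t)}"
          unfolding X_def using am by (simp add: pf[symmetric] del: of_nat_dvd_iff)
        also have "\<dots> \<le> degree f" by (rule roots_mod_p[OF p]) (use cf npd in metis)
        finally show "card {v\<in>X a. p dvd Fr m a c \<eta> (z(a:=v))} \<le> m" using df by linarith
      qed
    qed auto
    moreover have "card (X a) = p" by (simp add: X_def)
    ultimately have "card {x\<in>PiE {..<a+2} X. p dvd Fr m a c \<eta> x} * p \<le> m * card (PiE {..<a+2} X)"
      by simp
    moreover have "Par p a S = PiE {..<a+2} X" by (simp add: Par_def X_def)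
    ultimately show ?thesis unfolding eqset by simp
  next
    case False
    hence q0a: "q0 < a" by simp
    have "card {x\<in>PiE {..<a+2} X. p dvd Fr m a c \<eta> x} * card (X q0) \<le> 1 * card (PiE {..<a+2} X)"
    proof (rule pivot_count[OF _ _ finX])
      show "\<forall>z\<in>PiE ({..<a+2} - {q0}) X. card {v\<in>X q0. p dvd Fr m a c \<eta> (z(q0:=v))} \<le> 1"
      proof
        fix z assume z: "z \<in> PiE ({..<a+2} - {q0}) X"
        define K where "K = c + (\<Sum>q\<in>{..<a} - {q0}. \<eta> q * z q) +
           (\<Sum>q\<in>{a..<m}. \<eta> q * (z a ^ (q - a + 1) + (if q = m - 1 then z (a+1) else 0)))"
        define f where "f = [:int K, int (\<eta> q0):]"
        have pf: "int (Fr m a c \<eta> (z(q0:=v))) = poly f (int v)" for v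
        proof -
          have s1: "(\<Sum>q<a. \<eta> q * (z(q0:=v)) q) = \<eta> q0 * v + (\<Sum>q\<in>{..<a} - {q0}. \<eta> q * z q)"
          proof -
            have "(\<Sum>q<a. \<eta> q * (z(q0:=v)) q) = \<eta> q0 * (z(q0:=v)) q0 + (\<Sum>q\<in>{..<a} - {q0}. \<eta> q * (z(q0:=v)) q)"
              using q0a by (simp add: sum.remove)
            also have "(\<Sum>q\<in>{..<a} - {q0}. \<eta> q * (z(q0:=v)) q) = (\<Sum>q\<in>{..<a} - {q0}. \<eta> q * z q)"
              by (rule sum.cong) auto
            finally show ?thesis by simp
          qed
          have s2: "(\<Sum>q\<in>{a..<m}. \<eta> q * ((z(q0:=v)) a ^ (q - a + 1) + (if q = m - 1 then (z(q0:=v)) (a+1) else 0)))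
             = (\<Sum>q\<in>{a..<m}. \<eta> q * (z a ^ (q - a + 1) + (if q = m - 1 then z (a+1) else 0)))"
          proof -
            have "(z(q0:=v)) (a+1) = z (a+1)" "(z(q0:=v)) a = z a" using q0a by auto
            then show ?thesis by (simp only:)
          qed
          show ?thesis unfolding Fr_def s1 s2 K_def f_def by (simp add: algebra_simps)
        qed
        have "card {v\<in>X q0. p dvd Fr m a c \<eta> (z(q0:=v))} = card {t\<in>{..<p}. int p dvd poly f (int t)}"
          unfolding X_def using q0a by (simp add: pf[symmetric] del: of_nat_dvd_iff)
        also have "\<dots> \<le> degree f"
        proof (rule roots_mod_p[OF p])
          have "coeff f 1 = int (\<eta> q0)" by (simp add: f_def)
          then show "\<exists>j. \<not> int p dvd coeff f j" using npd by metis
        qed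
        also have "degree f \<le> 1" by (simp add: f_def)
        finally show "card {v\<in>X q0. p dvd Fr m a c \<eta> (z(q0:=v))} \<le> 1" .
      qed
    qed (use q0a in auto)
    moreover have "card (X q0) = p" using q0a by (simp add: X_def)
    ultimately have h1: "card {x\<in>PiE {..<a+2} X. p dvd Fr m a c \<eta> x} * p \<le> 1 * card (PiE {..<a+2} X)"
      by simp
    have h2: "1 * card (PiE {..<a+2} X) \<le> m * card (PiE {..<a+2} X)" using am by simp
    have "card {x\<in>PiE {..<a+2} X. p dvd Fr m a c \<eta> x} * p \<le> m * card (PiE {..<a+2} X)"
      using le_trans[OF h1 h2] .
    moreover have "Par p a S = PiE {..<a+2} X" by (simp add: Par_def X_def)
    ultimately show ?thesis unfolding eqset by simp
  qed
qed

lemma Par_mem: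
  assumes "x \<in> Par p a S"
  shows "\<And>j. j < a + 2 \<Longrightarrow> j \<noteq> a + 1 \<Longrightarrow> x j < p" "x (a+1) \<in> S"
proof -
  have b: "\<forall>i\<in>{..<a+2}. x i \<in> (if i = a+1 then S else {..<p})"
    using assms by (simp add: Par_def PiE_iff)
  show "\<And>j. j < a + 2 \<Longrightarrow> j \<noteq> a + 1 \<Longrightarrow> x j < p"
  proof -
    fix j assume "j < a + 2" "j \<noteq> a + 1"
    with b[rule_format, of j] show "x j < p" by simp
  qed
  show "x (a+1) \<in> S" using b[rule_format, of "a+1"] by simp
qed

lemma phi_lt: "0 < p \<Longrightarrow> x \<in> Par p a S \<Longrightarrow> S \<subseteq> {..<p} \<Longrightarrow> phi p m a x q < p"
  using Par_mem(1)[of x p a S q] by (auto simp: phi_def)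

lemma phi_zero: "m \<le> q \<Longrightarrow> a < m \<Longrightarrow> phi p m a x q = 0"
  by (auto simp: phi_def)

lemma phi_inj:
  assumes p: "0 < p" and am: "a < m" and S: "S \<subseteq> {..<p}" and aS: "a + 1 < m \<or> S \<subseteq> {0}"
  shows "inj_on (phi p m a) (Par p a S)"
proof
  fix x y assume x: "x \<in> Par p a S" and y: "y \<in> Par p a S" and e: "phi p m a x = phi p m a y"
  have xr: "\<And>j. j < a + 2 \<Longrightarrow> j \<noteq> a + 1 \<Longrightarrow> x j < p" "x (a+1) \<in> S"
    and yr: "\<And>j. j < a + 2 \<Longrightarrow> j \<noteq> a + 1 \<Longrightarrow> y j < p" "y (a+1) \<in> S"
    using Par_mem[OF x] Par_mem[OF y] by auto
  have lo: "x j = y j" if "j < a" for j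
    using fun_cong[OF e, of j] that by (simp add: phi_def)
  have ea: "x a = y a \<and> x (a+1) = y (a+1)"
  proof (cases "a + 1 < m")
    case True
    have "phi p m a x a = x a" "phi p m a y a = y a"
      using True xr(1)[of a] yr(1)[of a] by (auto simp: phi_def)
    hence xa: "x a = y a" using e by metis
    have "phi p m a x (m-1) = (x a ^ (m - 1 - a + 1) + x (a+1)) mod p"
         "phi p m a y (m-1) = (y a ^ (m - 1 - a + 1) + y (a+1)) mod p"
      using True by (auto simp: phi_def)
    hence "(x a ^ (m - 1 - a + 1) + x (a+1)) mod p = (x a ^ (m - 1 - a + 1) + y (a+1)) mod p"
      using e xa by metis
    hence "[x (a+1) = y (a+1)] (mod p)" unfolding cong_def[symmetric] using cong_add_lcancel_nat by blast
    hence "x (a+1) mod p = y (a+1) mod p" by (simp add: cong_def)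
    moreover have "x (a+1) < p" "y (a+1) < p" using xr(2) yr(2) S by auto
    ultimately show ?thesis using xa by simp
  next
    case False
    hence S0: "S \<subseteq> {0}" and am1: "a = m - 1" using aS am by auto
    have x1: "x (a+1) = 0" "y (a+1) = 0" using xr(2) yr(2) S0 by auto
    have "phi p m a x a = x a" "phi p m a y a = y a"
      using am am1 x1 xr(1)[of a] yr(1)[of a] by (auto simp: phi_def)
    then show ?thesis using e x1 by metis
  qed
  show "x = y"
  proof (rule PiE_ext[OF x[unfolded Par_def] y[unfolded Par_def]])
    fix j assume "j \<in> {..<a+2}"
    hence "j < a \<or> j = a \<or> j = a + 1" by auto
    then show "x j = y j" using lo ea by auto
  qed
qed

definition rowv :: "nat \<Rightarrow> nat \<Rightarrow> (nat \<Rightarrow> nat) \<Rightarrow> nat \<Rightarrow> (nat \<Rightarrow> nat)" where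
  "rowv k n b i = (\<lambda>l. if l = i then 1 else if k \<le> l \<and> l < n then b (l - k) else 0)"

definition vsB :: "nat \<Rightarrow> nat \<Rightarrow> (nat \<Rightarrow> nat \<Rightarrow> nat) \<Rightarrow> (nat \<Rightarrow> nat) list" where
  "vsB k n B = map (\<lambda>i. rowv k n (B i) i) [0..<k]"

definition WB :: "nat \<Rightarrow> nat \<Rightarrow> nat \<Rightarrow> (nat \<Rightarrow> nat \<Rightarrow> nat) \<Rightarrow> (nat \<Rightarrow> nat) set" where
  "WB p k n B = span_p p (vsB k n B)"

definition good :: "nat \<Rightarrow> nat \<Rightarrow> nat \<Rightarrow> (nat \<Rightarrow> nat \<Rightarrow> nat) \<Rightarrow> bool" where
  "good p k m B \<longleftrightarrow> (\<forall>i<k. \<forall>q. B i q < p \<and> (m \<le> q \<longrightarrow> B i q = 0))"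

lemma lc_eval: "lin_comb p (vsB k n B) c l = (\<Sum>j<k. c j * rowv k n (B j) j l) mod p"
  unfolding lin_comb_def vsB_def by (auto intro!: sum.cong arg_cong[where f="\<lambda>x. x mod p"])

lemma lc_low: "l < k \<Longrightarrow> lin_comb p (vsB k n B) c l = c l mod p"
proof -
  assume l: "l < k"
  have "(\<Sum>j<k. c j * rowv k n (B j) j l) = (\<Sum>j<k. if j = l then c j else 0)"
    using l by (intro sum.cong) (auto simp: rowv_def)
  also have "\<dots> = c l" using l by simp
  finally show ?thesis by (simp add: lc_eval)
qed

lemma lc_high: "k + q < n \<Longrightarrow> lin_comb p (vsB k n B) c (k + q) = (\<Sum>j<k. c j * B j q) mod p"
proof -
  assume l: "k + q < n"
  have "(\<Sum>j<k. c j * rowv k n (B j) j (k+q)) = (\<Sum>j<k. c j * B j q)"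
    using l by (intro sum.cong) (auto simp: rowv_def)
  then show ?thesis by (simp add: lc_eval)
qed

lemma rowv_Fpn:
  assumes "2 \<le> p" "good p k m B" "i < k" "n = k + m"
  shows "rowv k n (B i) i \<in> Fpn p n"
  using assms unfolding Fpn_def rowv_def good_def by auto

lemma WB_Gr:
  assumes "2 \<le> p" "good p k m B" "n = k + m"
  shows "WB p k n B \<in> Gr p n k"
proof -
  have "length (vsB k n B) = k" by (simp add: vsB_def)
  moreover have "set (vsB k n B) \<subseteq> Fpn p n" using rowv_Fpn[OF assms(1,2) _ assms(3)] by (auto simp: vsB_def)
  moreover have "lin_indep_p p (vsB k n B)"
    unfolding lin_indep_p_def
  proof (intro allI impI)
    fix c j assume z: "lin_comb p (vsB k n B) c = zero_vec" and j: "j < length (vsB k n B)"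
    hence "j < k" by (simp add: vsB_def)
    from fun_cong[OF z, of j] lc_low[OF this] show "c j mod p = 0" by (simp add: zero_vec_def)
  qed
  ultimately show ?thesis unfolding Gr_def WB_def by blast
qed

lemma rowv_in_WB:
  assumes "2 \<le> p" "good p k m B" "i < k" "n = k + m"
  shows "rowv k n (B i) i \<in> WB p k n B"
proof -
  define c where "c = (\<lambda>j. if j = i then 1 else 0::nat)"
  have "lin_comb p (vsB k n B) c = rowv k n (B i) i"
  proof
    fix l
    have "(\<Sum>j<k. c j * rowv k n (B j) j l) = rowv k n (B i) i l"
    proof -
      have "(\<Sum>j<k. c j * rowv k n (B j) j l) = (\<Sum>j<k. if j = i then rowv k n (B j) j l else 0)"
        by (intro sum.cong) (auto simp: c_def)
      then show ?thesis using assms(3) by simp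
    qed
    moreover have "rowv k n (B i) i l < p" using assms unfolding rowv_def good_def by auto
    ultimately show "lin_comb p (vsB k n B) c l = rowv k n (B i) i l" by (simp add: lc_eval)
  qed
  then show ?thesis unfolding WB_def span_p_def by (metis (mono_tags, lifting) mem_Collect_eq)
qed

lemma WB_inj:
  assumes p: "2 \<le> p" and g: "good p k m B" "good p k m B'" and n: "n = k + m"
    and e: "WB p k n B = WB p k n B'" and i: "i < k" and q: "q < m"
  shows "B i q = B' i q"
proof -
  have "rowv k n (B i) i \<in> WB p k n B'" using rowv_in_WB[OF p g(1) i n] e by simp
  then obtain c where c: "rowv k n (B i) i = lin_comb p (vsB k n B') c"
    unfolding WB_def span_p_def by blast
  have cl: "c l mod p = (if l = i then 1 else 0)" if "l < k" for l
    using fun_cong[OF c, of l] lc_low[OF that] that i p by (auto simp: rowv_def)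
  have "B i q = rowv k n (B i) i (k + q)" using q n i by (simp add: rowv_def)
  also have "\<dots> = (\<Sum>j<k. c j * B' j q) mod p" using c lc_high[of k q n p B' c] q n by simp
  also have "\<dots> = (\<Sum>j<k. (c j mod p) * B' j q) mod p"
    by (subst mod_sum_eq[symmetric], subst (2) mod_sum_eq[symmetric]) (simp add: mod_mult_left_eq)
  also have "(\<Sum>j<k. (c j mod p) * B' j q) = (\<Sum>j<k. if j = i then B' j q else 0)"
    by (intro sum.cong) (auto simp: cl)
  also have "\<dots> = B' i q" using i by simp
  finally show ?thesis using g(2) i unfolding good_def by simp
qed

lemma sum_shift_k: "(\<Sum>l\<in>{k..<k+m}. g l) = (\<Sum>q<m. g (k + q::nat))"
  by (induct m) auto

lemma Per_cond:
  assumes p: "2 \<le> p" and g: "good p k m B" and n: "n = k + m" and i: "i < k"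
    and xi: "\<xi> \<in> Per p n (WB p k n B)"
  shows "(\<xi> i + (\<Sum>q<m. \<xi> (k+q) * B i q)) mod p = 0"
proof -
  have "dot_p p n \<xi> (rowv k n (B i) i) = 0"
    using xi rowv_in_WB[OF p g i n] unfolding Per_def by blast
  moreover have "(\<Sum>l<n. \<xi> l * rowv k n (B i) i l) = \<xi> i + (\<Sum>q<m. \<xi> (k+q) * B i q)"
  proof -
    have sp: "{..<n} = {..<k} \<union> {k..<k+m}" using n by auto
    have "(\<Sum>l<n. \<xi> l * rowv k n (B i) i l) = (\<Sum>l<k. \<xi> l * rowv k n (B i) i l) + (\<Sum>l\<in>{k..<k+m}. \<xi> l * rowv k n (B i) i l)"
      by (subst sp, rule sum.union_disjoint) auto
    also have "(\<Sum>l<k. \<xi> l * rowv k n (B i) i l) = (\<Sum>l<k. if l = i then \<xi> l else 0)"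
      by (intro sum.cong) (auto simp: rowv_def)
    also have "\<dots> = \<xi> i" using i by simp
    also have "(\<Sum>l\<in>{k..<k+m}. \<xi> l * rowv k n (B i) i l) = (\<Sum>q<m. \<xi> (k+q) * rowv k n (B i) i (k+q))"
      by (rule sum_shift_k)
    also have "\<dots> = (\<Sum>q<m. \<xi> (k+q) * B i q)"
      using i n by (intro sum.cong) (auto simp: rowv_def)
    finally show ?thesis .
  qed
  ultimately show ?thesis by (simp add: dot_p_def)
qed

lemma card_Par:
  assumes "finite S"
  shows "card (Par p a S) = p ^ (a + 1) * card S"
proof -
  have "card (Par p a S) = (\<Prod>j<a+2. card (if j = a+1 then S else {..<p}))"
    unfolding Par_def by (rule card_PiE) simp
  also have "\<dots> = (\<Prod>j<a+1. card (if j = a+1 then S else {..<p})) * card S"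
    by (simp add: prod.lessThan_Suc)
  also have "(\<Prod>j<a+1. card (if j = a+1 then S else {..<p})) = (\<Prod>j<a+1. p)"
    by (intro prod.cong) auto
  finally show ?thesis by simp
qed

lemma sum_ind_lt: "t \<le> k \<Longrightarrow> (\<Sum>i<k. (if i < t then 1 else 0::nat)) = t"
proof (induct k)
  case 0 then show ?case by simp
next
  case (Suc k)
  show ?case
  proof (cases "t \<le> k")
    case True with Suc show ?thesis by simp
  next
    case False
    hence "t = Suc k" using Suc by simp
    moreover have "(\<Sum>i<k. (if i < Suc k then 1 else 0::nat)) = k" by simp
    ultimately show ?thesis by simp
  qed
qed

lemma sum_aux: "(\<Sum>i<k. c + f i + (1::nat)) = (\<Sum>i<k. c) + (\<Sum>i<k. f i) + k"
  by (induct k) auto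

lemma construction:
  assumes p: "prime p" and k: "1 \<le> k" and kd: "k \<le> d" and dm: "d + 1 \<le> m * k"
    and s0: "1 \<le> s0" "s0 \<le> p" and n: "n = k + m"
  shows "\<exists>G. G \<subseteq> Gr p n k \<and> card G = p ^ d * s0 \<and>
     (\<forall>\<xi>\<in>Fpn p n - {zero_vec}. card {W\<in>G. \<xi> \<in> Per p n W} * p ^ k \<le> m ^ k * card G)"
proof -
  have p2: "2 \<le> p" using p prime_ge_2_nat by blast
  define r where "r = d - k"
  define a where "a = (\<lambda>i. r div k + (if i < r mod k then 1 else 0::nat))"
  define S where "S = (\<lambda>i. if i = k - 1 then {..<s0} else {0::nat})"
  define Rr where "Rr = (\<lambda>i. phi p m (a i) ` Par p (a i) (S i))"
  define Fam where "Fam = PiE {..<k} Rr"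
  define G where "G = WB p k n ` Fam"
  have rlt: "r < (m - 1) * k" using kd dm k unfolding r_def by (simp add: diff_mult_distrib)
  have rdiv: "r div k + 2 \<le> m"
  proof -
    have "r div k < m - 1" using rlt k by (simp add: div_less_iff_less_mult)
    then show ?thesis by simp
  qed
  have am: "a i < m" for i using rdiv by (simp add: a_def)
  have aS: "a i + 1 < m \<or> S i \<subseteq> {0}" if "i < k" for i
  proof (cases "i = k - 1")
    case True
    have "r mod k < k" using k by simp
    hence "\<not> i < r mod k" using True by linarith
    then show ?thesis using rdiv by (simp add: a_def)
  next
    case False then show ?thesis by (simp add: S_def)
  qed
  have Ssub: "S i \<subseteq> {..<p}" "finite (S i)" for i using s0 p2 by (auto simp: S_def)
  have inj_phi: "inj_on (phi p m (a i)) (Par p (a i) (S i))" if "i < k" for i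
    using phi_inj[OF _ am Ssub(1) aS[OF that]] p2 by simp
  have cardRr: "card (Rr i) = card (Par p (a i) (S i))" if "i < k" for i
    unfolding Rr_def using card_image[OF inj_phi[OF that]] .
  have finPar: "finite (Par p (a i) (S i))" for i
    unfolding Par_def using Ssub by (intro finite_PiE) auto
  have finRr: "finite (Rr i)" for i unfolding Rr_def using finPar by simp
  have goodF: "good p k m B" if "B \<in> Fam" for B
    unfolding good_def
  proof (intro allI impI conjI)
    fix i q assume i: "i < k"
    then have "B i \<in> Rr i" using that by (auto simp: Fam_def PiE_iff)
    then obtain x where x: "x \<in> Par p (a i) (S i)" "B i = phi p m (a i) x" unfolding Rr_def by blast
    show "B i q < p" using phi_lt[OF _ x(1) Ssub(1)] p2 x(2) by simp
    show "m \<le> q \<Longrightarrow> B i q = 0" using phi_zero[OF _ am] x(2) by simp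
  qed
  have injW: "inj_on (WB p k n) Fam"
  proof
    fix B B' assume B: "B \<in> Fam" and B': "B' \<in> Fam" and e: "WB p k n B = WB p k n B'"
    show "B = B'"
    proof (rule PiE_ext[OF B[unfolded Fam_def] B'[unfolded Fam_def]])
      fix i assume "i \<in> {..<k}"
      hence i: "i < k" by simp
      show "B i = B' i"
      proof
        fix q show "B i q = B' i q"
        proof (cases "q < m")
          case True then show ?thesis using WB_inj[OF p2 goodF[OF B] goodF[OF B'] n e i] by simp
        next
          case False then show ?thesis using goodF[OF B] goodF[OF B'] i unfolding good_def by simp
        qed
      qed
    qed
  qed
  have cardG: "card G = card Fam" unfolding G_def by (rule card_image[OF injW])
  have sum_a: "(\<Sum>i<k. a i + 1) = d"
  proof -
    have "(\<Sum>i<k. a i + 1) = (\<Sum>i<k. r div k) + (\<Sum>i<k. (if i < r mod k then 1 else 0::nat)) + k"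
      unfolding a_def by (rule sum_aux)
    also have "(\<Sum>i<k. (if i < r mod k then 1 else 0::nat)) = r mod k"
      using k by (intro sum_ind_lt) (simp add: less_imp_le)
    finally show ?thesis using kd by (simp add: r_def)
  qed
  have prodS: "(\<Prod>i<k. card (S i)) = s0"
  proof -
    have "(\<Prod>i<k. card (S i)) = (\<Prod>i<k. if i = k - 1 then s0 else 1)"
      by (intro prod.cong) (auto simp: S_def)
    also have "\<dots> = s0" using k by (simp add: prod.delta)
    finally show ?thesis .
  qed
  have cardFam: "card Fam = p ^ d * s0"
  proof -
    have "card Fam = (\<Prod>i<k. card (Rr i))" unfolding Fam_def by (rule card_PiE) simp
    also have "\<dots> = (\<Prod>i<k. p ^ (a i + 1) * card (S i))"
      by (intro prod.cong) (auto simp: cardRr card_Par Ssub)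
    also have "\<dots> = p ^ (\<Sum>i<k. a i + 1) * (\<Prod>i<k. card (S i))"
      by (simp add: prod.distrib power_sum)
    finally show ?thesis using sum_a prodS by simp
  qed
  have GGr: "G \<subseteq> Gr p n k"
  proof
    fix W assume "W \<in> G"
    then obtain B where "B \<in> Fam" "W = WB p k n B" unfolding G_def by blast
    then show "W \<in> Gr p n k" using WB_Gr[OF p2 goodF[OF \<open>B \<in> Fam\<close>] n] by simp
  qed
  have cnt: "card {W\<in>G. \<xi> \<in> Per p n W} * p ^ k \<le> m ^ k * card G" if xi: "\<xi> \<in> Fpn p n - {zero_vec}" for \<xi>
  proof -
    define T where "T = (\<lambda>i. {b\<in>Rr i. (\<xi> i + (\<Sum>q<m. \<xi> (k+q) * b q)) mod p = 0})"
    have s1: "{W\<in>G. \<xi> \<in> Per p n W} \<subseteq> WB p k n ` PiE {..<k} T"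
    proof
      fix W assume "W \<in> {W\<in>G. \<xi> \<in> Per p n W}"
      then obtain B where B: "B \<in> Fam" "W = WB p k n B" "\<xi> \<in> Per p n (WB p k n B)" unfolding G_def by auto
      have "B \<in> PiE {..<k} T"
        using B(1) Per_cond[OF p2 goodF[OF B(1)] n _ B(3)] unfolding Fam_def T_def by (auto simp: PiE_iff)
      then show "W \<in> WB p k n ` PiE {..<k} T" using B(2) by blast
    qed
    have finT: "finite (T i)" for i using finRr by (simp add: T_def)
    have c1: "card {W\<in>G. \<xi> \<in> Per p n W} \<le> (\<Prod>i<k. card (T i))"
    proof -
      have "card {W\<in>G. \<xi> \<in> Per p n W} \<le> card (WB p k n ` PiE {..<k} T)"
        by (rule card_mono[OF _ s1]) (use finT in \<open>auto intro: finite_PiE\<close>)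
      also have "\<dots> \<le> card (PiE {..<k} T)" by (rule card_image_le) (use finT in \<open>auto intro: finite_PiE\<close>)
      also have "\<dots> = (\<Prod>i<k. card (T i))" by (rule card_PiE) simp
      finally show ?thesis .
    qed
    show ?thesis
    proof (cases "\<exists>q0<m. \<xi> (k+q0) mod p \<noteq> 0")
      case True
      then obtain q0 where q0: "q0 < m" "\<xi> (k+q0) mod p \<noteq> 0" by blast
      have rowb: "card (T i) * p \<le> m * card (Rr i)" if i: "i < k" for i
      proof -
        have "T i = phi p m (a i) ` {x\<in>Par p (a i) (S i). (\<xi> i + (\<Sum>q<m. \<xi> (k+q) * phi p m (a i) x q)) mod p = 0}"
          unfolding T_def Rr_def by auto
        hence h1: "card (T i) \<le> card {x\<in>Par p (a i) (S i). (\<xi> i + (\<Sum>q<m. \<xi> (k+q) * phi p m (a i) x q)) mod p = 0}"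
          using card_image_le[of "{x\<in>Par p (a i) (S i). (\<xi> i + (\<Sum>q<m. \<xi> (k+q) * phi p m (a i) x q)) mod p = 0}" "phi p m (a i)"] finPar[of i] by simp
        have h2: "card {x\<in>Par p (a i) (S i). (\<xi> i + (\<Sum>q<m. \<xi> (k+q) * phi p m (a i) x q)) mod p = 0} * p
               \<le> m * card (Par p (a i) (S i))"
          by (rule row_count[OF p am Ssub q0(1)]) (use q0 in simp)
        show ?thesis using cardRr[OF i] le_trans[OF mult_le_mono1[OF h1, of p] h2] by simp
      qed
      have "(\<Prod>i<k. card (T i)) * p ^ k = (\<Prod>i<k. card (T i) * p)" by (simp add: prod.distrib)
      also have "\<dots> \<le> (\<Prod>i<k. m * card (Rr i))" by (rule prod_mono) (use rowb in simp)
      also have "\<dots> = m ^ k * card Fam"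
        unfolding Fam_def by (simp add: prod.distrib card_PiE)
      moreover have "card {W\<in>G. \<xi> \<in> Per p n W} * p ^ k \<le> (\<Prod>i<k. card (T i)) * p ^ k"
        using c1 by simp
      ultimately show ?thesis unfolding cardG by linarith
    next
      case False
      have "\<exists>i<k. \<xi> i \<noteq> 0"
      proof (rule ccontr)
        assume "\<not> ?thesis"
        hence lo: "\<xi> i = 0" if "i < k" for i using that by blast
        have "\<xi> = zero_vec"
        proof
          fix l show "\<xi> l = zero_vec l"
          proof (cases "l < k")
            case True then show ?thesis using lo by (simp add: zero_vec_def)
          next
            case False
            show ?thesis
            proof (cases "l < n")
              case True
              define q where "q = l - k"
              have q: "l = k + q" "q < m" using False n True by (auto simp: q_def)
              have "\<xi> l < p" using xi True by (auto simp: Fpn_def)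
              moreover have "\<xi> (k+q) mod p = 0" using q(2) \<open>\<not> (\<exists>q0<m. \<xi> (k+q0) mod p \<noteq> 0)\<close> by blast
              ultimately show ?thesis using q(1) by (simp add: zero_vec_def)
            next
              case False then show ?thesis using xi by (auto simp: Fpn_def zero_vec_def)
            qed
          qed
        qed
        then show False using xi by simp
      qed
      then obtain i where i: "i < k" "\<xi> i \<noteq> 0" by blast
      have "T i = {}"
      proof -
        have "(\<Sum>q<m. \<xi> (k+q) * b q) mod p = 0" for b
        proof -
          have "(\<Sum>q<m. \<xi> (k+q) * b q) mod p = (\<Sum>q<m. (\<xi> (k+q) mod p) * b q) mod p"
            by (subst mod_sum_eq[symmetric], subst (2) mod_sum_eq[symmetric]) (simp add: mod_mult_left_eq)
          also have "(\<Sum>q<m. (\<xi> (k+q) mod p) * b q) = 0"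
            by (rule sum.neutral) (use False in auto)
          finally show ?thesis by simp
        qed
        note z0 = this
        have lt: "\<xi> i < p" using xi i n by (auto simp: Fpn_def)
        have "(\<xi> i + (\<Sum>q<m. \<xi> (k+q) * b q)) mod p \<noteq> 0" for b
        proof -
          have "(\<xi> i + (\<Sum>q<m. \<xi> (k+q) * b q)) mod p = (\<xi> i + (\<Sum>q<m. \<xi> (k+q) * b q) mod p) mod p"
            by (simp add: mod_add_right_eq)
          then show ?thesis using z0[of b] lt i by simp
        qed
        note nz = this
        show ?thesis
        proof (rule equals0I)
          fix b assume "b \<in> T i"
          hence "(\<xi> i + (\<Sum>q<m. \<xi> (k+q) * b q)) mod p = 0" unfolding T_def by simp
          with nz[of b] show False by simp
        qed
      qed
      hence "card (T i) = 0" by simp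
      hence "(\<Prod>i<k. card (T i)) = 0" using i by (intro prod_zero) auto
      then have "card {W\<in>G. \<xi> \<in> Per p n W} = 0" using c1 by linarith
      then show ?thesis by simp
    qed
  qed
  show ?thesis
  proof (intro exI conjI)
    show "G \<subseteq> Gr p n k" by (rule GGr)
    show "card G = p ^ d * s0" using cardG cardFam by simp
    show "\<forall>\<xi>\<in>Fpn p n - {zero_vec}. card {W\<in>G. \<xi> \<in> Per p n W} * p ^ k \<le> m ^ k * card G"
      using cnt by blast
  qed
qed

theorem corollary3p4:
  fixes n m :: nat and \<alpha> :: real
  assumes "n \<ge> 2" and "1 \<le> m" and "m \<le> n - 1"
    and "real (n - m) < \<alpha>" and "\<alpha> < real (m * (n - m))"
  shows "\<exists>C>0. \<forall>p::nat. prime p \<longrightarrow>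
           (\<exists>G. G \<subseteq> Gr p n (n - m) \<and>
                real p powr \<alpha> \<le> C * real (card G) \<and>
                real (card G) \<le> C * real p powr \<alpha> \<and>
                (\<forall>\<xi>\<in>Fpn p n - {zero_vec}.
                   real (card {W\<in>G. \<xi> \<in> Per p n W})
                     \<le> C * real (card G) * real p powr (- real (n - m))))"
proof -
  define k where "k = n - m"
  have k1: "1 \<le> k" and nkm: "n = k + m" using assms(1-3) by (auto simp: k_def)
  define d where "d = nat \<lfloor>\<alpha>\<rfloor>"
  have ka: "real k < \<alpha>" and am: "\<alpha> < real (m * k)" using assms(4,5) unfolding k_def by (simp_all only:)
  have kd: "k \<le> d"
  proof -
    have "int k \<le> \<lfloor>\<alpha>\<rfloor>" using ka by (simp add: le_floor_iff)
    then show ?thesis unfolding d_def by linarith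
  qed
  have dm: "d + 1 \<le> m * k"
  proof -
    have "\<lfloor>\<alpha>\<rfloor> < int (m * k)" using am by (simp add: floor_less_iff)
    moreover have "0 \<le> real k" by simp
    hence "0 \<le> \<lfloor>\<alpha>\<rfloor>" using ka by simp
    ultimately have "nat \<lfloor>\<alpha>\<rfloor> < m * k" by (simp add: nat_less_iff)
    then show ?thesis unfolding d_def by linarith
  qed
  have dle: "real d \<le> \<alpha>" and dgt: "\<alpha> < real d + 1"
    using kd ka unfolding d_def by (auto simp: of_nat_nat)
  define C :: real where "C = 2 * real m ^ k"
  have "1 \<le> real m ^ k" using assms(2) by (simp add: one_le_power)
  hence C2: "2 \<le> C" unfolding C_def by linarith
  show ?thesis
  proof (intro exI[of _ C] conjI allI impI)
    show "0 < C" using C2 by simp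
    fix p :: nat assume p: "prime p"
    have p2: "2 \<le> p" using p prime_ge_2_nat by blast
    hence pr: "(1::real) < real p" by simp
    define x where "x = real p powr (\<alpha> - real d)"
    define s0 where "s0 = nat \<lceil>x\<rceil>"
    have x1: "1 \<le> x" unfolding x_def using pr dle by (simp add: ge_one_powr_ge_zero)
    have xp: "x \<le> real p"
    proof -
      have "x \<le> real p powr 1" unfolding x_def using pr dgt by (intro powr_mono) auto
      then show ?thesis using pr by simp
    qed
    have s0r: "x \<le> real s0" "real s0 \<le> x + 1" unfolding s0_def using x1
      by (auto simp: of_nat_nat)
    have s01: "1 \<le> s0" using s0r x1 by simp
    have s0p: "s0 \<le> p"
    proof -
      have "\<lceil>x\<rceil> \<le> int p" using xp by (simp add: ceiling_le_iff)
      then show ?thesis unfolding s0_def by linarith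
    qed
    obtain G where G: "G \<subseteq> Gr p n k" "card G = p ^ d * s0"
      "\<forall>\<xi>\<in>Fpn p n - {zero_vec}. card {W\<in>G. \<xi> \<in> Per p n W} * p ^ k \<le> m ^ k * card G"
      using construction[OF p k1 kd dm s01 s0p nkm] by blast
    have pa: "real p powr \<alpha> = real p ^ d * x"
    proof -
      have "real p powr \<alpha> = real p powr (real d + (\<alpha> - real d))" by simp
      also have "\<dots> = real p powr real d * x" unfolding x_def by (rule powr_add)
      also have "real p powr real d = real p ^ d" using pr by (simp add: powr_realpow)
      finally show ?thesis .
    qed
    have cG: "real (card G) = real p ^ d * real s0" using G(2) by simp
    have pd0: "0 < real p ^ d" using pr by simp
    have h1: "G \<subseteq> Gr p (n) (n - m)" using G(1) by (simp add: k_def)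
    have h2: "real p powr \<alpha> \<le> C * real (card G)"
    proof -
      have "real p powr \<alpha> \<le> real (card G)" unfolding pa cG using s0r(1) pd0 by simp
      also have "\<dots> \<le> C * real (card G)" using C2 by (intro mult_right_mono[of 1 C, simplified]) auto
      finally show ?thesis .
    qed
    have h3: "real (card G) \<le> C * real p powr \<alpha>"
    proof -
      have "real (card G) \<le> real p ^ d * (2 * x)" unfolding cG using s0r(2) x1 pd0
        by (intro mult_left_mono) auto
      also have "\<dots> = 2 * real p powr \<alpha>" unfolding pa by simp
      also have "\<dots> \<le> C * real p powr \<alpha>" using C2 by (intro mult_right_mono) auto
      finally show ?thesis .
    qed
    have h4: "\<forall>\<xi>\<in>Fpn p n - {zero_vec}. real (card {W\<in>G. \<xi> \<in> Per p n W})
                     \<le> C * real (card G) * real p powr (- real (n - m))"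
    proof
      fix \<xi> assume xi: "\<xi> \<in> Fpn p n - {zero_vec}"
      have "real (card {W\<in>G. \<xi> \<in> Per p n W} * p ^ k) \<le> real (m ^ k * card G)"
        using G(3) xi by (simp only: of_nat_le_iff)
      hence h: "real (card {W\<in>G. \<xi> \<in> Per p n W}) * real p ^ k \<le> real m ^ k * real (card G)" by simp
      have pk: "real p powr (- real k) = 1 / real p ^ k" using pr by (simp add: powr_minus powr_realpow divide_inverse)
      have "real (card {W\<in>G. \<xi> \<in> Per p n W}) \<le> real m ^ k * real (card G) / real p ^ k"
        using h pd0 pr by (simp add: pos_le_divide_eq)
      also have "\<dots> = real m ^ k * real (card G) * real p powr (- real k)" unfolding pk by simp
      also have "\<dots> \<le> C * real (card G) * real p powr (- real k)"
        unfolding C_def by (intro mult_right_mono) auto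
      finally show "real (card {W\<in>G. \<xi> \<in> Per p n W}) \<le> C * real (card G) * real p powr (- real (n - m))"
        by (simp add: k_def)
    qed
    show "\<exists>G. G \<subseteq> Gr p n (n - m) \<and>
                real p powr \<alpha> \<le> C * real (card G) \<and>
                real (card G) \<le> C * real p powr \<alpha> \<and>
                (\<forall>\<xi>\<in>Fpn p n - {zero_vec}.
                   real (card {W\<in>G. \<xi> \<in> Per p n W})
                     \<le> C * real (card G) * real p powr (- real (n - m)))"
      by (intro exI[of _ G] conjI h1 h2 h3 h4)
  qed
qed

end
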